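(* Let $q\in\Bbbk^\times$. (1) The linear map $\phi:A(q)\to A(q^{-1})$ with $\phi(e_1)=e_1$, $\phi(e_2)=e_2$, $\phi(a)=c$, $\phi(b)=d$, $\phi(c)=a$, $\phi(d)=b$ extends to an isomorphism. (2) The linear map $\psi:A(q)\to A(q^{-1})$ with $\psi(e_1)=e_2$, $\psi(e_2)=e_1$, $\psi(a)=qb$, $\psi(b)=a$, $\psi(c)=d$, $\psi(d)=c$ extends to an isomorphism.
   Context: $\Bbbk$ is an algebraically closed field of characteristic zero. Paths are written left to right. Let $Q$ be the quiver with vertices $e_1,e_2$, arrows $a,c:e_1\to e_2$ and $b,d:e_2\to e_1$; $A(q)=\Bbbk Q/(ab-cd,\ ba-q\,dc)$. *)

theory Defs
  imports Main "HOL-Computational_Algebra.Polynomial"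
begin

text \<open>Paths are written left to right and represented as a start vertex together with
  a list of composable arrows; the trivial path at v is (v, []).\<close>

datatype vert = V1 | V2
datatype arr = Aa | Ab | Ac | Ad

fun src :: "arr \<Rightarrow> vert" where
  "src Aa = V1" | "src Ac = V1" | "src Ab = V2" | "src Ad = V2"

fun tgt :: "arr \<Rightarrow> vert" where
  "tgt Aa = V2" | "tgt Ac = V2" | "tgt Ab = V1" | "tgt Ad = V1"

type_synonym path = "vert \<times> arr list"

fun composable :: "vert \<Rightarrow> arr list \<Rightarrow> bool" where
  "composable v [] = True"
| "composable v (x # xs) = (src x = v \<and> composable (tgt x) xs)"

fun pend :: "vert \<Rightarrow> arr list \<Rightarrow> vert" where
  "pend v [] = v"
| "pend v (x # xs) = pend (tgt x) xs"

definition valid_path :: "path \<Rightarrow> bool" where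
  "valid_path p = composable (fst p) (snd p)"

definition kQ :: "(path \<Rightarrow> 'k::field) set" where
  "kQ = {f. finite {p. f p \<noteq> 0} \<and> (\<forall>p. f p \<noteq> 0 \<longrightarrow> valid_path p)}"

text \<open>Multiplication = concatenation of paths (left to right), extended bilinearly;
  non-composable products are zero.\<close>

definition pmult :: "(path \<Rightarrow> 'k::field) \<Rightarrow> (path \<Rightarrow> 'k) \<Rightarrow> (path \<Rightarrow> 'k)" where
  "pmult f g = (\<lambda>(v, xs). \<Sum>i\<le>length xs. f (v, take i xs) * g (pend v (take i xs), drop i xs))"

definition padd :: "(path \<Rightarrow> 'k::field) \<Rightarrow> (path \<Rightarrow> 'k) \<Rightarrow> (path \<Rightarrow> 'k)" where
  "padd f g = (\<lambda>p. f p + g p)"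

definition psub :: "(path \<Rightarrow> 'k::field) \<Rightarrow> (path \<Rightarrow> 'k) \<Rightarrow> (path \<Rightarrow> 'k)" where
  "psub f g = (\<lambda>p. f p - g p)"

definition psmult :: "'k::field \<Rightarrow> (path \<Rightarrow> 'k) \<Rightarrow> (path \<Rightarrow> 'k)" where
  "psmult c f = (\<lambda>p. c * f p)"

definition pzero :: "path \<Rightarrow> 'k::field" where
  "pzero = (\<lambda>p. 0)"

definition pone :: "path \<Rightarrow> 'k::field" where
  "pone = (\<lambda>p. if snd p = [] then 1 else 0)"

definition basis :: "path \<Rightarrow> path \<Rightarrow> 'k::field" where
  "basis p = (\<lambda>r. if r = p then 1 else 0)"

definition e1 :: "path \<Rightarrow> 'k::field" where "e1 = basis (V1, [])"
definition e2 :: "path \<Rightarrow> 'k::field" where "e2 = basis (V2, [])"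
definition ga :: "path \<Rightarrow> 'k::field" where "ga = basis (V1, [Aa])"
definition gb :: "path \<Rightarrow> 'k::field" where "gb = basis (V2, [Ab])"
definition gc :: "path \<Rightarrow> 'k::field" where "gc = basis (V1, [Ac])"
definition gd :: "path \<Rightarrow> 'k::field" where "gd = basis (V2, [Ad])"

inductive_set ideal_gen :: "(path \<Rightarrow> 'k::field) set \<Rightarrow> (path \<Rightarrow> 'k) set"
  for R :: "(path \<Rightarrow> 'k) set" where
  zero: "pzero \<in> ideal_gen R"
| gen: "\<lbrakk>r \<in> R; x \<in> kQ; y \<in> kQ\<rbrakk> \<Longrightarrow> pmult (pmult x r) y \<in> ideal_gen R"
| add: "\<lbrakk>u \<in> ideal_gen R; w \<in> ideal_gen R\<rbrakk> \<Longrightarrow> padd u w \<in> ideal_gen R"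

text \<open>The ideal of relations of A(q) = kQ / (ab - cd, ba - q dc).\<close>

definition relI :: "'k::field \<Rightarrow> (path \<Rightarrow> 'k) set" where
  "relI q = ideal_gen {psub (pmult ga gb) (pmult gc gd),
                       psub (pmult gb ga) (psmult q (pmult gd gc))}"

text \<open>A k-algebra homomorphism F : kQ -> kQ induces an isomorphism
  A(q) = kQ/relI q  ->  A(q') = kQ/relI q' iff it maps relI q into relI q'
  (well defined), the induced map is injective and surjective.\<close>

definition alg_hom_kQ :: "((path \<Rightarrow> 'k::field) \<Rightarrow> (path \<Rightarrow> 'k)) \<Rightarrow> bool" where
  "alg_hom_kQ F \<longleftrightarrow>
     (\<forall>x\<in>kQ. F x \<in> kQ)
   \<and> (\<forall>x\<in>kQ. \<forall>y\<in>kQ. F (padd x y) = padd (F x) (F y))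
   \<and> (\<forall>c. \<forall>x\<in>kQ. F (psmult c x) = psmult c (F x))
   \<and> (\<forall>x\<in>kQ. \<forall>y\<in>kQ. F (pmult x y) = pmult (F x) (F y))
   \<and> F pone = pone"

definition induces_iso :: "'k::field \<Rightarrow> 'k \<Rightarrow> ((path \<Rightarrow> 'k) \<Rightarrow> (path \<Rightarrow> 'k)) \<Rightarrow> bool" where
  "induces_iso q q' F \<longleftrightarrow>
     alg_hom_kQ F
   \<and> (\<forall>x\<in>kQ. x \<in> relI q \<longrightarrow> F x \<in> relI q')
   \<and> (\<forall>x\<in>kQ. F x \<in> relI q' \<longrightarrow> x \<in> relI q)
   \<and> (\<forall>y\<in>kQ. \<exists>x\<in>kQ. psub (F x) y \<in> relI q')"

end

theory Submission
  imports Defs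
begin

lemma tri_swap:
  fixes T :: "nat \<Rightarrow> nat \<Rightarrow> 'a::comm_monoid_add"
  shows "(\<Sum>i\<le>n. \<Sum>j\<le>i. T j i) = (\<Sum>j\<le>n. \<Sum>k\<le>n-j. T j (j+k))"
proof (induction n)
  case 0 then show ?case by simp
next
  case (Suc n)
  have "(\<Sum>j\<le>Suc n. \<Sum>k\<le>Suc n-j. T j (j+k))
     = (\<Sum>j\<le>n. \<Sum>k\<le>Suc n-j. T j (j+k)) + T (Suc n) (Suc n)" by simp
  also have "(\<Sum>j\<le>n. \<Sum>k\<le>Suc n-j. T j (j+k)) = (\<Sum>j\<le>n. (\<Sum>k\<le>n-j. T j (j+k)) + T j (Suc n))"
  proof (rule sum.cong)
    fix j assume "j \<in> {..n}"
    then have "Suc n - j = Suc (n-j)" by auto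
    then show "(\<Sum>k\<le>Suc n-j. T j (j+k)) = (\<Sum>k\<le>n-j. T j (j+k)) + T j (Suc n)"
      using \<open>j \<in> {..n}\<close> by simp
  qed simp
  finally show ?case using Suc by (simp add: sum.distrib add.assoc)
qed

lemma pend_append: "pend v (xs @ ys) = pend (pend v xs) ys"
  by (induction xs arbitrary: v) auto

lemma composable_append: "composable v (xs @ ys) = (composable v xs \<and> composable (pend v xs) ys)"
  by (induction xs arbitrary: v) auto

lemma pmult_assoc:
  fixes f g h :: "path \<Rightarrow> 'k::field"
  shows "pmult (pmult f g) h = pmult f (pmult g h)"
proof (rule ext, clarify)
  fix v :: vert and xs :: "arr list"
  let ?n = "length xs"
  define T where "T j i = f (v, take j xs) * g (pend v (take j xs), take (i-j) (drop j xs))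
      * h (pend v (take i xs), drop i xs)" for j i
  have L: "pmult (pmult f g) h (v, xs) = (\<Sum>i\<le>?n. \<Sum>j\<le>i. T j i)"
  proof -
    have "pmult (pmult f g) h (v, xs) = (\<Sum>i\<le>?n. pmult f g (v, take i xs) * h (pend v (take i xs), drop i xs))"
      by (simp add: pmult_def)
    also have "\<dots> = (\<Sum>i\<le>?n. \<Sum>j\<le>i. T j i)"
    proof (rule sum.cong[OF refl])
      fix i assume i: "i \<in> {..?n}"
      have "pmult f g (v, take i xs) = (\<Sum>j\<le>i. f (v, take j (take i xs)) * g (pend v (take j (take i xs)), drop j (take i xs)))"
        using i by (simp add: pmult_def min_def)
      also have "\<dots> = (\<Sum>j\<le>i. f (v, take j xs) * g (pend v (take j xs), take (i-j) (drop j xs)))"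
        by (rule sum.cong[OF refl]) (simp add: drop_take)
      finally show "pmult f g (v, take i xs) * h (pend v (take i xs), drop i xs) = (\<Sum>j\<le>i. T j i)"
        unfolding T_def by (simp only: sum_distrib_right)
    qed
    finally show ?thesis .
  qed
  have R: "pmult f (pmult g h) (v, xs) = (\<Sum>j\<le>?n. \<Sum>k\<le>?n-j. T j (j+k))"
  proof -
    have "pmult f (pmult g h) (v, xs) = (\<Sum>j\<le>?n. f (v, take j xs) * pmult g h (pend v (take j xs), drop j xs))"
      by (simp add: pmult_def)
    also have "\<dots> = (\<Sum>j\<le>?n. \<Sum>k\<le>?n-j. T j (j+k))"
    proof (rule sum.cong[OF refl])
      fix j assume j: "j \<in> {..?n}"
      have "pmult g h (pend v (take j xs), drop j xs) = (\<Sum>k\<le>?n-j. g (pend v (take j xs), take k (drop j xs)) * h (pend (pend v (take j xs)) (take k (drop j xs)), drop k (drop j xs)))"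
        by (simp add: pmult_def)
      also have "\<dots> = (\<Sum>k\<le>?n-j. g (pend v (take j xs), take k (drop j xs)) * h (pend v (take (j+k) xs), drop (j+k) xs))"
        apply (rule sum.cong[OF refl])
        subgoal for k
          using drop_drop[of k j xs] by (simp add: take_add pend_append add.commute[of k j])
        done
      finally show "f (v, take j xs) * pmult g h (pend v (take j xs), drop j xs) = (\<Sum>k\<le>?n-j. T j (j+k))"
        unfolding T_def by (simp only: sum_distrib_left mult.assoc diff_add_inverse)
    qed
    finally show ?thesis .
  qed
  show "pmult (pmult f g) h (v, xs) = pmult f (pmult g h) (v, xs)"
    unfolding L R by (rule tri_swap)
qed

lemma pmult_pone_left: "pmult pone f = (f :: path \<Rightarrow> 'k::field)"
proof (rule ext, clarify)
  fix v :: vert and xs :: "arr list"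
  have "pmult pone f (v, xs) = (\<Sum>i\<le>length xs. pone (v, take i xs) * f (pend v (take i xs), drop i xs))"
    by (simp add: pmult_def)
  also have "\<dots> = (\<Sum>i\<le>length xs. (if i = 0 then f (v, xs) else 0))"
    by (rule sum.cong[OF refl]) (auto simp: pone_def)
  also have "\<dots> = f (v, xs)" by (simp add: sum.delta)
  finally show "pmult pone f (v, xs) = f (v, xs)" .
qed

lemma pmult_pone_right: "pmult f pone = (f :: path \<Rightarrow> 'k::field)"
proof (rule ext, clarify)
  fix v :: vert and xs :: "arr list"
  have "pmult f pone (v, xs) = (\<Sum>i\<le>length xs. f (v, take i xs) * pone (pend v (take i xs), drop i xs))"
    by (simp add: pmult_def)
  also have "\<dots> = (\<Sum>i\<le>length xs. (if i = length xs then f (v, xs) else 0))"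
    by (rule sum.cong[OF refl]) (auto simp: pone_def)
  also have "\<dots> = f (v, xs)" by (simp add: sum.delta)
  finally show "pmult f pone (v, xs) = f (v, xs)" .
qed

lemma pmult_padd_right: "pmult (x::path \<Rightarrow> 'k::field) (padd u w) = padd (pmult x u) (pmult x w)"
  by (auto simp: pmult_def padd_def fun_eq_iff distrib_left sum.distrib)

lemma pmult_padd_left: "pmult (padd u w) (x::path \<Rightarrow> 'k::field) = padd (pmult u x) (pmult w x)"
  by (auto simp: pmult_def padd_def fun_eq_iff distrib_right sum.distrib)

lemma pmult_pzero_right: "pmult (x::path \<Rightarrow> 'k::field) pzero = pzero"
  by (auto simp: pmult_def pzero_def fun_eq_iff)

lemma pmult_pzero_left: "pmult pzero (x::path \<Rightarrow> 'k::field) = pzero"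
  by (auto simp: pmult_def pzero_def fun_eq_iff)

lemma pmult_psmult_left: "pmult (psmult c x) (y::path \<Rightarrow> 'k::field) = psmult c (pmult x y)"
  by (auto simp: pmult_def psmult_def fun_eq_iff sum_distrib_left mult.assoc)

lemma pmult_psmult_right: "pmult x (psmult c (y::path \<Rightarrow> 'k::field)) = psmult c (pmult x y)"
  by (auto simp: pmult_def psmult_def fun_eq_iff sum_distrib_left mult.left_commute)

lemma psmult_pzero: "psmult c pzero = (pzero :: path \<Rightarrow> 'k::field)"
  by (simp add: psmult_def pzero_def)

lemma psmult_padd: "psmult c (padd u w) = padd (psmult c u) (psmult c (w :: path \<Rightarrow> 'k::field))"
  by (simp add: psmult_def padd_def fun_eq_iff distrib_left)

lemma pone_kQ: "(pone :: path \<Rightarrow> 'k::field) \<in> kQ"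
proof -
  have "{p. (pone :: path \<Rightarrow> 'k) p \<noteq> 0} \<subseteq> {(V1, []), (V2, [])}"
    by (auto simp: pone_def) (metis vert.exhaust)
  then have "finite {p. (pone :: path \<Rightarrow> 'k) p \<noteq> 0}" by (rule finite_subset) simp
  then show ?thesis unfolding kQ_def
    by (auto simp: pone_def valid_path_def)
qed

lemma psmult_kQ: "x \<in> kQ \<Longrightarrow> psmult c x \<in> kQ"
  unfolding kQ_def psmult_def by (auto intro: finite_subset)

lemma pmult_nz:
  assumes "pmult f g (v, xs) \<noteq> 0"
  shows "\<exists>i\<le>length xs. f (v, take i xs) \<noteq> 0 \<and> g (pend v (take i xs), drop i xs) \<noteq> 0"
proof (rule ccontr)
  assume "\<not> ?thesis"
  then have "pmult f g (v, xs) = 0" unfolding pmult_def by (auto intro!: sum.neutral)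
  with assms show False by simp
qed

lemma pmult_kQ:
  assumes f: "f \<in> kQ" and g: "g \<in> kQ"
  shows "pmult f g \<in> kQ"
proof -
  let ?Sf = "{p. f p \<noteq> 0}" and ?Sg = "{p. g p \<noteq> 0}"
  have sub: "{p. pmult f g p \<noteq> 0} \<subseteq> (\<lambda>(p, r). (fst p, snd p @ snd r)) ` (?Sf \<times> ?Sg)"
  proof
    fix p assume "p \<in> {p. pmult f g p \<noteq> 0}"
    then obtain v xs where p: "p = (v, xs)" and nz: "pmult f g (v, xs) \<noteq> 0" by (cases p) auto
    from pmult_nz[OF nz] obtain i where "f (v, take i xs) \<noteq> 0" "g (pend v (take i xs), drop i xs) \<noteq> 0"
      by blast
    then show "p \<in> (\<lambda>(p, r). (fst p, snd p @ snd r)) ` (?Sf \<times> ?Sg)"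
      unfolding p by (intro image_eqI[where x="((v, take i xs), (pend v (take i xs), drop i xs))"]) auto
  qed
  have fin: "finite ?Sf" "finite ?Sg" using f g by (auto simp: kQ_def)
  have valid: "valid_path p" if "pmult f g p \<noteq> 0" for p
  proof -
    obtain v xs where p: "p = (v, xs)" by (cases p)
    from pmult_nz[of f g v xs] that p obtain i where "f (v, take i xs) \<noteq> 0" "g (pend v (take i xs), drop i xs) \<noteq> 0"
      by blast
    then have "composable v (take i xs)" "composable (pend v (take i xs)) (drop i xs)"
      using f g by (auto simp: kQ_def valid_path_def)
    then have "composable v (take i xs @ drop i xs)" by (simp only: composable_append)
    then show ?thesis by (simp add: p valid_path_def)
  qed
  show ?thesis unfolding kQ_def
    using finite_subset[OF sub] fin valid by auto
qed

lemma ideal_psmult: "u \<in> ideal_gen R \<Longrightarrow> psmult c u \<in> ideal_gen R"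
proof (induction rule: ideal_gen.induct)
  case zero then show ?case by (simp add: psmult_pzero ideal_gen.zero)
next
  case (gen r x y)
  have "psmult c (pmult (pmult x r) y) = pmult (pmult (psmult c x) r) y"
    by (simp add: pmult_psmult_left)
  then show ?case using gen by (simp add: ideal_gen.gen psmult_kQ)
next
  case (add u w) then show ?case by (simp add: psmult_padd ideal_gen.add)
qed

lemma ideal_lmult: "u \<in> ideal_gen R \<Longrightarrow> z \<in> kQ \<Longrightarrow> pmult z u \<in> ideal_gen R"
proof (induction rule: ideal_gen.induct)
  case zero then show ?case by (simp add: pmult_pzero_right ideal_gen.zero)
next
  case (gen r x y)
  have "pmult z (pmult (pmult x r) y) = pmult (pmult (pmult z x) r) y"
    by (simp add: pmult_assoc)
  then show ?case using gen by (simp add: ideal_gen.gen pmult_kQ)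
next
  case (add u w) then show ?case by (simp add: pmult_padd_right ideal_gen.add)
qed

lemma ideal_rmult: "u \<in> ideal_gen R \<Longrightarrow> z \<in> kQ \<Longrightarrow> pmult u z \<in> ideal_gen R"
proof (induction rule: ideal_gen.induct)
  case zero then show ?case by (simp add: pmult_pzero_left ideal_gen.zero)
next
  case (gen r x y)
  have "pmult (pmult (pmult x r) y) z = pmult (pmult x r) (pmult y z)"
    by (simp add: pmult_assoc)
  then show ?case using gen by (simp add: ideal_gen.gen pmult_kQ)
next
  case (add u w) then show ?case by (simp add: pmult_padd_left ideal_gen.add)
qed

lemma ideal_gen_in: "r \<in> R \<Longrightarrow> r \<in> ideal_gen R"
  using ideal_gen.gen[of r R pone pone] pone_kQ by (simp add: pmult_pone_left pmult_pone_right)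

definition relab :: "(vert \<Rightarrow> vert) \<Rightarrow> (arr \<Rightarrow> arr) \<Rightarrow> 'k::field \<Rightarrow> arr \<Rightarrow> (path \<Rightarrow> 'k) \<Rightarrow> (path \<Rightarrow> 'k)" where
  "relab \<tau> \<sigma> k z f = (\<lambda>(w, ys). k ^ count_list ys z * f (\<tau> w, map \<sigma> ys))"

definition good :: "(vert \<Rightarrow> vert) \<Rightarrow> (arr \<Rightarrow> arr) \<Rightarrow> bool" where
  "good \<tau> \<sigma> \<longleftrightarrow> (\<forall>x. \<tau> (\<tau> x) = x) \<and> (\<forall>x. \<sigma> (\<sigma> x) = x)
     \<and> (\<forall>x. src (\<sigma> x) = \<tau> (src x)) \<and> (\<forall>x. tgt (\<sigma> x) = \<tau> (tgt x))"

lemma pend_relab: "good \<tau> \<sigma> \<Longrightarrow> pend (\<tau> w) (map \<sigma> ys) = \<tau> (pend w ys)"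
  by (induction ys arbitrary: w) (auto simp: good_def)

lemma composable_relab: "good \<tau> \<sigma> \<Longrightarrow> composable (\<tau> w) (map \<sigma> ys) = composable w ys"
proof (induction ys arbitrary: w)
  case Nil then show ?case by simp
next
  case (Cons y ys)
  have inj: "\<tau> a = \<tau> b \<longleftrightarrow> a = b" for a b using Cons.prems unfolding good_def by metis
  show ?case using Cons by (auto simp: good_def inj)
qed

lemma map_invol: "good \<tau> \<sigma> \<Longrightarrow> map \<sigma> (map \<sigma> ys) = ys"
  by (induction ys) (auto simp: good_def)

lemma count_map_invol: "good \<tau> \<sigma> \<Longrightarrow> count_list (map \<sigma> ys) z1 = count_list ys (\<sigma> z1)"
proof (induction ys)
  case Nil then show ?case by simp
next
  case (Cons a ys)
  have "(\<sigma> a = z1) = (a = \<sigma> z1)" using Cons.prems unfolding good_def by metis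
  then show ?case using Cons by simp
qed

lemma relab_kQ:
  assumes g: "good \<tau> \<sigma>" and f: "f \<in> kQ"
  shows "relab \<tau> \<sigma> k z f \<in> kQ"
proof -
  have sub: "{p. relab \<tau> \<sigma> k z f p \<noteq> 0} \<subseteq> (\<lambda>(w, ys). (\<tau> w, map \<sigma> ys)) ` {p. f p \<noteq> 0}"
  proof
    fix p assume "p \<in> {p. relab \<tau> \<sigma> k z f p \<noteq> 0}"
    then obtain w ys where p: "p = (w, ys)" and nz: "f (\<tau> w, map \<sigma> ys) \<noteq> 0"
      by (cases p) (auto simp: relab_def)
    show "p \<in> (\<lambda>(w, ys). (\<tau> w, map \<sigma> ys)) ` {p. f p \<noteq> 0}"
      using nz g map_invol[OF g] unfolding p good_def
      by (intro image_eqI[where x="(\<tau> w, map \<sigma> ys)"]) auto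
  qed
  have valid: "valid_path p" if "relab \<tau> \<sigma> k z f p \<noteq> 0" for p
  proof -
    obtain w ys where p: "p = (w, ys)" by (cases p)
    with that have "f (\<tau> w, map \<sigma> ys) \<noteq> 0" by (auto simp: relab_def)
    with f have "composable (\<tau> w) (map \<sigma> ys)" by (auto simp: kQ_def valid_path_def)
    then show ?thesis using composable_relab[OF g] by (simp add: p valid_path_def)
  qed
  have "finite {p. f p \<noteq> 0}" using f by (simp add: kQ_def)
  then show ?thesis unfolding kQ_def using finite_subset[OF sub] valid by auto
qed

lemma relab_pmult:
  assumes g: "good \<tau> \<sigma>"
  shows "relab \<tau> \<sigma> k z (pmult f h) = pmult (relab \<tau> \<sigma> k z f) (relab \<tau> \<sigma> k z h)"
proof (rule ext, clarify)
  fix w :: vert and ys :: "arr list"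
  have c: "k ^ count_list ys z = k ^ count_list (take i ys) z * k ^ count_list (drop i ys) z" for i
  proof -
    have "count_list ys z = count_list (take i ys) z + count_list (drop i ys) z"
      using count_list_append[of "take i ys" "drop i ys" z] by simp
    then show ?thesis by (simp add: power_add)
  qed
  show "relab \<tau> \<sigma> k z (pmult f h) (w, ys) = pmult (relab \<tau> \<sigma> k z f) (relab \<tau> \<sigma> k z h) (w, ys)"
  proof -
    have "relab \<tau> \<sigma> k z (pmult f h) (w, ys) = k ^ count_list ys z *
       (\<Sum>i\<le>length ys. f (\<tau> w, take i (map \<sigma> ys)) * h (pend (\<tau> w) (take i (map \<sigma> ys)), drop i (map \<sigma> ys)))"
      by (simp add: relab_def pmult_def)
    also have "\<dots> = (\<Sum>i\<le>length ys. k ^ count_list (take i ys) z * f (\<tau> w, map \<sigma> (take i ys)) *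
        (k ^ count_list (drop i ys) z * h (\<tau> (pend w (take i ys)), map \<sigma> (drop i ys))))"
      unfolding sum_distrib_left
      apply (rule sum.cong[OF refl])
      subgoal for i using c[of i] by (simp add: take_map drop_map pend_relab[OF g] ac_simps)
      done
    also have "\<dots> = pmult (relab \<tau> \<sigma> k z f) (relab \<tau> \<sigma> k z h) (w, ys)"
      by (simp add: relab_def pmult_def)
    finally show ?thesis .
  qed
qed

lemma relab_padd: "relab \<tau> \<sigma> k z (padd f h) = padd (relab \<tau> \<sigma> k z f) (relab \<tau> \<sigma> k z h)"
  by (auto simp: relab_def padd_def fun_eq_iff distrib_left)

lemma relab_psub: "relab \<tau> \<sigma> k z (psub f h) = psub (relab \<tau> \<sigma> k z f) (relab \<tau> \<sigma> k z h)"
  by (auto simp: relab_def psub_def fun_eq_iff right_diff_distrib)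

lemma relab_psmult: "relab \<tau> \<sigma> k z (psmult c f) = psmult c (relab \<tau> \<sigma> k z f)"
  by (auto simp: relab_def psmult_def fun_eq_iff)

lemma relab_pone: "relab \<tau> \<sigma> k z pone = pone"
  by (auto simp: relab_def pone_def fun_eq_iff)

lemma relab_pzero: "relab \<tau> \<sigma> k z pzero = pzero"
  by (auto simp: relab_def pzero_def fun_eq_iff)

lemma relab_basis:
  assumes g: "good \<tau> \<sigma>"
  shows "relab \<tau> \<sigma> k z (basis (v, xs)) = psmult (k ^ count_list (map \<sigma> xs) z) (basis (\<tau> v, map \<sigma> xs))"
proof (rule ext, clarify)
  fix w :: vert and ys :: "arr list"
  have "((\<tau> w, map \<sigma> ys) = (v, xs)) = ((w, ys) = (\<tau> v, map \<sigma> xs))"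
    using g map_invol[OF g, of ys] map_invol[OF g, of xs] unfolding good_def by auto
  then show "relab \<tau> \<sigma> k z (basis (v, xs)) (w, ys) = psmult (k ^ count_list (map \<sigma> xs) z) (basis (\<tau> v, map \<sigma> xs)) (w, ys)"
    unfolding relab_def psmult_def basis_def by auto
qed

lemma relab_inv:
  assumes g: "good \<tau> \<sigma>" and z: "\<sigma> z1 = z2" and k: "k2 * k1 = 1"
  shows "relab \<tau> \<sigma> k2 z2 (relab \<tau> \<sigma> k1 z1 f) = f"
proof (rule ext, clarify)
  fix w :: vert and ys :: "arr list"
  have "relab \<tau> \<sigma> k2 z2 (relab \<tau> \<sigma> k1 z1 f) (w, ys)
     = k2 ^ count_list ys z2 * (k1 ^ count_list (map \<sigma> ys) z1 * f (\<tau> (\<tau> w), map \<sigma> (map \<sigma> ys)))"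
    by (simp add: relab_def)
  also have "\<dots> = (k2 * k1) ^ count_list ys z2 * f (w, ys)"
    using g map_invol[OF g, of ys] count_map_invol[OF g, of ys z1] z
    unfolding good_def by (simp add: power_mult_distrib)
  finally show "relab \<tau> \<sigma> k2 z2 (relab \<tau> \<sigma> k1 z1 f) (w, ys) = f (w, ys)" using k by simp
qed

lemma relab_ideal:
  assumes g: "good \<tau> \<sigma>"
    and gens: "\<forall>r\<in>R. \<exists>c r'. r' \<in> R' \<and> relab \<tau> \<sigma> k z r = psmult c r'"
  shows "u \<in> ideal_gen R \<Longrightarrow> relab \<tau> \<sigma> k z u \<in> ideal_gen R'"
proof (induction rule: ideal_gen.induct)
  case zero then show ?case by (simp add: relab_pzero ideal_gen.zero)
next
  case (gen r x y)
  from gens gen.hyps(1) obtain c r' where r': "r' \<in> R'" "relab \<tau> \<sigma> k z r = psmult c r'" by blast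
  have "relab \<tau> \<sigma> k z r \<in> ideal_gen R'" using r' by (simp add: ideal_psmult ideal_gen_in)
  then show ?case
    using gen by (simp add: relab_pmult[OF g] ideal_lmult ideal_rmult relab_kQ[OF g])
next
  case (add u w) then show ?case by (simp add: relab_padd ideal_gen.add)
qed

definition Rg :: "'k::field \<Rightarrow> (path \<Rightarrow> 'k) set" where
  "Rg q = {psub (pmult ga gb) (pmult gc gd), psub (pmult gb ga) (psmult q (pmult gd gc))}"

lemma relI_Rg: "relI q = ideal_gen (Rg q)"
  by (simp add: relI_def Rg_def)

lemma psub_self: "psub f f = (pzero :: path \<Rightarrow> 'k::field)"
  by (simp add: psub_def pzero_def)

lemma relab_iso:
  assumes g: "good \<tau> \<sigma>" and z: "\<sigma> z1 = z2" and k: "k1 * k2 = (1::'k::field)"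
    and gF: "\<forall>r\<in>Rg q. \<exists>c r'. r' \<in> Rg q' \<and> relab \<tau> \<sigma> k1 z1 r = psmult c r'"
    and gH: "\<forall>r\<in>Rg q'. \<exists>c r'. r' \<in> Rg q \<and> relab \<tau> \<sigma> k2 z2 r = psmult c r'"
  shows "induces_iso q q' (relab \<tau> \<sigma> k1 z1)"
proof -
  have z': "\<sigma> z2 = z1" using g z unfolding good_def by auto
  have k': "k2 * k1 = 1" using k by (simp add: mult.commute)
  have HF: "relab \<tau> \<sigma> k2 z2 (relab \<tau> \<sigma> k1 z1 f) = f" for f
    by (rule relab_inv[OF g z k'])
  have FH: "relab \<tau> \<sigma> k1 z1 (relab \<tau> \<sigma> k2 z2 f) = f" for f
    by (rule relab_inv[OF g z' k])
  have hom: "alg_hom_kQ (relab \<tau> \<sigma> k1 z1)"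
    unfolding alg_hom_kQ_def
    by (simp add: relab_kQ[OF g] relab_padd relab_psmult relab_pmult[OF g] relab_pone)
  have b: "\<forall>x\<in>kQ. x \<in> relI q \<longrightarrow> relab \<tau> \<sigma> k1 z1 x \<in> relI q'"
    using relab_ideal[OF g gF] by (simp add: relI_Rg)
  have c: "\<forall>x\<in>kQ. relab \<tau> \<sigma> k1 z1 x \<in> relI q' \<longrightarrow> x \<in> relI q"
    using relab_ideal[OF g gH] HF by (metis relI_Rg)
  have d: "\<forall>y\<in>kQ. \<exists>x\<in>kQ. psub (relab \<tau> \<sigma> k1 z1 x) y \<in> relI q'"
  proof
    fix y :: "path \<Rightarrow> 'k" assume y: "y \<in> kQ"
    show "\<exists>x\<in>kQ. psub (relab \<tau> \<sigma> k1 z1 x) y \<in> relI q'"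
      by (rule bexI[of _ "relab \<tau> \<sigma> k2 z2 y"])
         (simp_all add: FH psub_self relI_Rg ideal_gen.zero relab_kQ[OF g y])
  qed
  show ?thesis unfolding induces_iso_def using hom b c d by blast
qed

fun sphi :: "arr \<Rightarrow> arr" where
  "sphi Aa = Ac" | "sphi Ab = Ad" | "sphi Ac = Aa" | "sphi Ad = Ab"

fun spsi :: "arr \<Rightarrow> arr" where
  "spsi Aa = Ab" | "spsi Ab = Aa" | "spsi Ac = Ad" | "spsi Ad = Ac"

fun tsw :: "vert \<Rightarrow> vert" where
  "tsw V1 = V2" | "tsw V2 = V1"

lemma good_phi: "good id sphi"
  unfolding good_def
  by (intro conjI allI; case_tac x; simp)

lemma good_psi: "good tsw spsi"
  unfolding good_def
  by (intro conjI allI; case_tac x; simp)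

lemma psmult_one: "psmult 1 f = (f :: path \<Rightarrow> 'k::field)"
  by (simp add: psmult_def)

lemma phi_gens:
  fixes k :: "'k::field"
  shows "relab id sphi 1 z (e1 :: path \<Rightarrow> 'k) = e1" "relab id sphi 1 z (e2 :: path \<Rightarrow> 'k) = e2"
    "relab id sphi 1 z (ga :: path \<Rightarrow> 'k) = gc" "relab id sphi 1 z (gb :: path \<Rightarrow> 'k) = gd"
    "relab id sphi 1 z (gc :: path \<Rightarrow> 'k) = ga" "relab id sphi 1 z (gd :: path \<Rightarrow> 'k) = gb"
  by (simp_all add: e1_def e2_def ga_def gb_def gc_def gd_def relab_basis[OF good_phi] psmult_one)

lemma psi_gens:
  fixes k :: "'k::field"
  shows "relab tsw spsi k Ab (e1 :: path \<Rightarrow> 'k) = e2" "relab tsw spsi k Ab (e2 :: path \<Rightarrow> 'k) = e1"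
    "relab tsw spsi k Ab (ga :: path \<Rightarrow> 'k) = psmult k gb" "relab tsw spsi k Ab (gb :: path \<Rightarrow> 'k) = ga"
    "relab tsw spsi k Ab (gc :: path \<Rightarrow> 'k) = gd" "relab tsw spsi k Ab (gd :: path \<Rightarrow> 'k) = gc"
  by (simp_all add: e1_def e2_def ga_def gb_def gc_def gd_def relab_basis[OF good_psi] psmult_one)

lemma psiH_gens:
  fixes k :: "'k::field"
  shows 
    "relab tsw spsi k Aa (ga :: path \<Rightarrow> 'k) = gb" "relab tsw spsi k Aa (gb :: path \<Rightarrow> 'k) = psmult k ga"
    "relab tsw spsi k Aa (gc :: path \<Rightarrow> 'k) = gd" "relab tsw spsi k Aa (gd :: path \<Rightarrow> 'k) = gc"
  by (simp_all add: e1_def e2_def ga_def gb_def gc_def gd_def relab_basis[OF good_psi] psmult_one)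

lemmas rsimps = relab_psub relab_psmult pmult_psmult_left pmult_psmult_right
  relab_pmult[OF good_phi] relab_pmult[OF good_psi] phi_gens psi_gens psiH_gens

lemma phiF:
  fixes q :: "'k::field" assumes q: "q \<noteq> 0"
  shows "\<forall>r\<in>Rg (q). \<exists>c r'. r' \<in> Rg (inverse q) \<and> relab id sphi 1 Aa r = psmult c r'"
proof -
  have A: "relab id sphi 1 Aa (psub (pmult ga gb) (pmult gc gd)) = psmult (-1) (psub (pmult ga gb) (pmult gc gd))"
    by (simp add: rsimps, simp add: psub_def psmult_def fun_eq_iff field_simps q)
  have B: "relab id sphi 1 Aa (psub (pmult gb ga) (psmult (q) (pmult gd gc))) = psmult (-q) (psub (pmult gb ga) (psmult (inverse q) (pmult gd gc)))"
    by (simp add: rsimps, simp add: psub_def psmult_def fun_eq_iff field_simps q)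
  show ?thesis unfolding Rg_def using A B by auto
qed

lemma phiH:
  fixes q :: "'k::field" assumes q: "q \<noteq> 0"
  shows "\<forall>r\<in>Rg (inverse q). \<exists>c r'. r' \<in> Rg (q) \<and> relab id sphi 1 Ac r = psmult c r'"
proof -
  have A: "relab id sphi 1 Ac (psub (pmult ga gb) (pmult gc gd)) = psmult (-1) (psub (pmult ga gb) (pmult gc gd))"
    by (simp add: rsimps, simp add: psub_def psmult_def fun_eq_iff field_simps q)
  have B: "relab id sphi 1 Ac (psub (pmult gb ga) (psmult (inverse q) (pmult gd gc))) = psmult (- inverse q) (psub (pmult gb ga) (psmult (q) (pmult gd gc)))"
    by (simp add: rsimps, simp add: psub_def psmult_def fun_eq_iff field_simps q)
  show ?thesis unfolding Rg_def using A B by auto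
qed

lemma psiF:
  fixes q :: "'k::field" assumes q: "q \<noteq> 0"
  shows "\<forall>r\<in>Rg (q). \<exists>c r'. r' \<in> Rg (inverse q) \<and> relab tsw spsi q Ab r = psmult c r'"
proof -
  have A: "relab tsw spsi q Ab (psub (pmult ga gb) (pmult gc gd)) = psmult (q) (psub (pmult gb ga) (psmult (inverse q) (pmult gd gc)))"
    by (simp add: rsimps, simp add: psub_def psmult_def fun_eq_iff field_simps q)
  have B: "relab tsw spsi q Ab (psub (pmult gb ga) (psmult (q) (pmult gd gc))) = psmult (q) (psub (pmult ga gb) (pmult gc gd))"
    by (simp add: rsimps, simp add: psub_def psmult_def fun_eq_iff field_simps q)
  show ?thesis unfolding Rg_def using A B by auto
qed

lemma psiH:
  fixes q :: "'k::field" assumes q: "q \<noteq> 0"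
  shows "\<forall>r\<in>Rg (inverse q). \<exists>c r'. r' \<in> Rg (q) \<and> relab tsw spsi (inverse q) Aa r = psmult c r'"
proof -
  have A: "relab tsw spsi (inverse q) Aa (psub (pmult ga gb) (pmult gc gd)) = psmult (inverse q) (psub (pmult gb ga) (psmult (q) (pmult gd gc)))"
    by (simp add: rsimps, simp add: psub_def psmult_def fun_eq_iff field_simps q)
  have B: "relab tsw spsi (inverse q) Aa (psub (pmult gb ga) (psmult (inverse q) (pmult gd gc))) = psmult (inverse q) (psub (pmult ga gb) (pmult gc gd))"
    by (simp add: rsimps, simp add: psub_def psmult_def fun_eq_iff field_simps q)
  show ?thesis unfolding Rg_def using A B by auto
qed

theorem lemma3p5:
  fixes q :: "'k::field_char_0"
  assumes alg_closed: "\<forall>p :: 'k poly. degree p > 0 \<longrightarrow> (\<exists>x. poly p x = 0)"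
    and q_unit: "q \<noteq> 0"
  shows "(\<exists>F. induces_iso q (inverse q) F
              \<and> F e1 = e1 \<and> F e2 = e2
              \<and> F ga = gc \<and> F gb = gd \<and> F gc = ga \<and> F gd = gb)
       \<and> (\<exists>G. induces_iso q (inverse q) G
              \<and> G e1 = e2 \<and> G e2 = e1
              \<and> G ga = psmult q gb \<and> G gb = ga \<and> G gc = gd \<and> G gd = gc)"
proof (intro conjI)
  have "induces_iso q (inverse q) (relab id sphi (1::'k) Aa)"
    by (rule relab_iso[OF good_phi _ _ phiF[OF q_unit] phiH[OF q_unit]]) simp_all
  then show "\<exists>F. induces_iso q (inverse q) F
              \<and> F e1 = e1 \<and> F e2 = e2
              \<and> F ga = gc \<and> F gb = gd \<and> F gc = ga \<and> F gd = gb"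
    using phi_gens by blast
next
  have "induces_iso q (inverse q) (relab tsw spsi q Ab)"
    by (rule relab_iso[OF good_psi _ _ psiF[OF q_unit] psiH[OF q_unit]]) (simp_all add: q_unit)
  then show "\<exists>G. induces_iso q (inverse q) G
              \<and> G e1 = e2 \<and> G e2 = e1
              \<and> G ga = psmult q gb \<and> G gb = ga \<and> G gc = gd \<and> G gd = gc"
    using psi_gens by blast
qed

end
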